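(* Let $\alpha$ be a nonzero real number. Let $\gamma(t)=\Psi(u(t),v(t))$ be an $\alpha$-stationary curve in $\mathbb H^2$ which is not of constant curvature, parametrized by arc length $t$ and not passing through $N$. Then there is a constant $c>0$ such that, expressing $t$ and $v$ as functions of $u$, $$t(u)=\pm\int^u\frac{s^\alpha\sinh(s)}{\sqrt{s^{2\alpha}\sinh^2(s)-c^2}}\,ds,\qquad v(u)=\pm\int^u\frac{c}{\sinh(s)\sqrt{s^{2\alpha}\sinh^2(s)-c^2}}\,ds.$$
   Context: The hyperbolic plane is $\mathbb H^2=\{(x,y,z):x^2+y^2-z^2=-1,\ z>0\}$ with the metric induced by the Lorentzian inner product $\langle x,y\rangle_\epsilon=x_1y_1+x_2y_2-x_3y_3$. It is parametrized by $\Psi(u,v)=(\sinh u\cos v,\sinh u\sin v,\cosh u)$, and $N=(0,0,1)$. The hyperbolic distance from $\Psi(u,v)$ to $N$ is $u$, and the line element is $\sqrt{u'^2+\sinh^2(u)v'^2}\,dt$. The energy of a curve $\gamma(t)=\Psi(u(t),v(t))$ with $u>0$ is $$E_\alpha[\gamma]=\int u^\alpha\sqrt{u'^2+\sinh^2(u)v'^2}\,dt.$$ The curve is $\alpha$-stationary if it is a critical point of $E_\alpha$, i.e. $(u,v)$ satisfies its Euler–Lagrange equations. Equivalently, its geodesic curvature satisfies $\kappa=\alpha\langle\mathbf n,\xi\rangle_\epsilon/u$, where $\mathbf n$ is the unit normal and $\xi=\Psi_u$. Throughout the paper, $\alpha\ne0$ and curves avoid $N$. Integrals $\int^u$ are indefinite,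 i.e. determined up to additive constants. *)

theory Defs
  imports "HOL-Analysis.Analysis"
begin

definition lor :: "real^3 \<Rightarrow> real^3 \<Rightarrow> real" where
  "lor x y = x$1 * y$1 + x$2 * y$2 - x$3 * y$3"

text \<open>Lorentzian cross product: lor (lcross a b) c = det(a,b,c).\<close>
definition lcross :: "real^3 \<Rightarrow> real^3 \<Rightarrow> real^3" where
  "lcross a b = vector [a$2 * b$3 - a$3 * b$2, a$3 * b$1 - a$1 * b$3, - (a$1 * b$2 - a$2 * b$1)]"

definition Psi :: "real \<Rightarrow> real \<Rightarrow> real^3" where
  "Psi u v = vector [sinh u * cos v, sinh u * sin v, cosh u]"

definition curve :: "(real \<Rightarrow> real) \<Rightarrow> (real \<Rightarrow> real) \<Rightarrow> real \<Rightarrow> real^3" where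
  "curve u v t = Psi (u t) (v t)"

definition tangent :: "(real \<Rightarrow> real) \<Rightarrow> (real \<Rightarrow> real) \<Rightarrow> real \<Rightarrow> real^3" where
  "tangent u v t = vector_derivative (curve u v) (at t)"

definition unit_normal :: "(real \<Rightarrow> real) \<Rightarrow> (real \<Rightarrow> real) \<Rightarrow> real \<Rightarrow> real^3" where
  "unit_normal u v t = lcross (curve u v t) (tangent u v t)"

definition geod_curv :: "(real \<Rightarrow> real) \<Rightarrow> (real \<Rightarrow> real) \<Rightarrow> real \<Rightarrow> real" where
  "geod_curv u v t = lor (vector_derivative (tangent u v) (at t)) (unit_normal u v t)"

definition C2_on :: "real set \<Rightarrow> (real \<Rightarrow> real) \<Rightarrow> bool" where
  "C2_on I f \<longleftrightarrow> (\<forall>t\<in>I. f differentiable (at t) \<and> deriv f differentiable (at t))"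

definition arc_length_on :: "real set \<Rightarrow> (real \<Rightarrow> real) \<Rightarrow> (real \<Rightarrow> real) \<Rightarrow> bool" where
  "arc_length_on I u v \<longleftrightarrow>
     (\<forall>t\<in>I. (deriv u t)\<^sup>2 + (sinh (u t))\<^sup>2 * (deriv v t)\<^sup>2 = 1)"

text \<open>Euler--Lagrange equations of E_alpha with Lagrangian
  L(u,v,p,q) = u^alpha sqrt(p^2 + sinh^2(u) q^2).\<close>
definition speed :: "(real \<Rightarrow> real) \<Rightarrow> (real \<Rightarrow> real) \<Rightarrow> real \<Rightarrow> real" where
  "speed u v t = sqrt ((deriv u t)\<^sup>2 + (sinh (u t))\<^sup>2 * (deriv v t)\<^sup>2)"

definition alpha_stationary ::
  "real \<Rightarrow> real set \<Rightarrow> (real \<Rightarrow> real) \<Rightarrow> (real \<Rightarrow> real) \<Rightarrow> bool" where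
  "alpha_stationary \<alpha> I u v \<longleftrightarrow>
     (\<forall>t\<in>I.
        ((\<lambda>s. u s powr \<alpha> * deriv u s / speed u v s) has_real_derivative
           (\<alpha> * u t powr (\<alpha> - 1) * speed u v t
            + u t powr \<alpha> * sinh (u t) * cosh (u t) * (deriv v t)\<^sup>2 / speed u v t)) (at t)
      \<and> ((\<lambda>s. u s powr \<alpha> * (sinh (u s))\<^sup>2 * deriv v s / speed u v s) has_real_derivative 0) (at t))"

end

theory Submission
  imports Defs
begin

lemma vec3_decomp: "(vector [a,b,c] :: real^3) = a *\<^sub>R vector [1,0,0] + b *\<^sub>R vector [0,1,0] + c *\<^sub>R vector [0,0,1]"
  by (simp add: vec_eq_iff forall_3 vector_3)

lemma vec3_deriv:
  assumes "(f1 has_real_derivative d1) (at t)" "(f2 has_real_derivative d2) (at t)" "(f3 has_real_derivative d3) (at t)"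
  shows "((\<lambda>s. vector [f1 s, f2 s, f3 s] :: real^3) has_vector_derivative vector [d1,d2,d3]) (at t)"
proof -
  have "((\<lambda>s. f1 s *\<^sub>R (vector [1,0,0]::real^3) + f2 s *\<^sub>R vector [0,1,0] + f3 s *\<^sub>R vector [0,0,1]) has_vector_derivative
     (d1 *\<^sub>R (vector [1,0,0]::real^3) + d2 *\<^sub>R vector [0,1,0] + d3 *\<^sub>R vector [0,0,1])) (at t)"
    using has_vector_derivative_scaleR[OF assms(1) has_vector_derivative_const]
      has_vector_derivative_scaleR[OF assms(2) has_vector_derivative_const]
      has_vector_derivative_scaleR[OF assms(3) has_vector_derivative_const]
    by (auto intro!: derivative_intros)
  then show ?thesis by (simp only: vec3_decomp[symmetric])
qed

lemma curve_deriv: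
  assumes "(u has_real_derivative du) (at s)" "(v has_real_derivative dv) (at s)"
  shows "(curve u v has_vector_derivative vector [du * cosh (u s) * cos (v s) - sinh (u s) * sin (v s) * dv,
     du * cosh (u s) * sin (v s) + sinh (u s) * cos (v s) * dv, du * sinh (u s)]) (at s)"
proof -
  have "curve u v = (\<lambda>s. vector [sinh (u s) * cos (v s), sinh (u s) * sin (v s), cosh (u s)])"
    by (simp add: fun_eq_iff curve_def Psi_def)
  moreover have "((\<lambda>s. vector [sinh (u s) * cos (v s), sinh (u s) * sin (v s), cosh (u s)] :: real^3) has_vector_derivative vector [du * cosh (u s) * cos (v s) - sinh (u s) * sin (v s) * dv,
     du * cosh (u s) * sin (v s) + sinh (u s) * cos (v s) * dv, du * sinh (u s)]) (at s)"
    by (rule vec3_deriv; (rule derivative_eq_intros assms refl)+; simp add: algebra_simps)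
  ultimately show ?thesis by simp
qed

lemma curv_zero:
  assumes "open I" "C2_on I u" "C2_on I v" "\<forall>s\<in>I. deriv v s = 0" "t \<in> I"
  shows "geod_curv u v t = 0"
proof -
  have du: "(u has_real_derivative deriv u s) (at s)" if "s \<in> I" for s
    using assms(2) that unfolding C2_on_def by (simp add: DERIV_deriv_iff_real_differentiable)
  have dv: "(v has_real_derivative deriv v s) (at s)" if "s \<in> I" for s
    using assms(3) that unfolding C2_on_def by (simp add: DERIV_deriv_iff_real_differentiable)
  have ddu: "(deriv u has_real_derivative deriv (deriv u) t) (at t)"
    using assms(2,5) unfolding C2_on_def by (simp add: DERIV_deriv_iff_real_differentiable)
  define T where "T = (\<lambda>s. vector [deriv u s * cosh (u s) * cos (v s), deriv u s * cosh (u s) * sin (v s), deriv u s * sinh (u s)] :: real^3)"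
  have tan: "tangent u v s = T s" if "s \<in> I" for s
    unfolding tangent_def T_def
    using curve_deriv[OF du[OF that] dv[OF that]] assms(4) that
    by (simp add: vector_derivative_at)
  define X where "X = (vector [deriv (deriv u) t * cosh (u t) * cos (v t) + deriv u t * (sinh (u t) * deriv u t * cos (v t) - cosh (u t) * sin (v t) * deriv v t),
     deriv (deriv u) t * cosh (u t) * sin (v t) + deriv u t * (sinh (u t) * deriv u t * sin (v t) + cosh (u t) * cos (v t) * deriv v t),
     deriv (deriv u) t * sinh (u t) + deriv u t * (cosh (u t) * deriv u t)] :: real^3)"
  have "(T has_vector_derivative X) (at t)"
    unfolding T_def X_def
    by (rule vec3_deriv; (rule derivative_eq_intros ddu du dv assms refl)+; simp add: algebra_simps)
  then have "(tangent u v has_vector_derivative X) (at t)"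
    by (rule has_vector_derivative_transform_within_open[OF _ assms(1) assms(5)]) (simp add: tan)
  then have "vector_derivative (tangent u v) (at t) = X" by (simp add: vector_derivative_at)
  then show ?thesis
    unfolding geod_curv_def unit_normal_def using tan[OF assms(5)] assms(4,5)
    by (simp add: X_def T_def lor_def lcross_def curve_def Psi_def vector_3 algebra_simps)
qed

lemma zero_times_fun: "(*) (0::real) = (\<lambda>h. 0)" by (rule ext) simp

theorem theorem2p9:
  fixes \<alpha> :: real and I :: "real set" and u v :: "real \<Rightarrow> real"
  assumes "\<alpha> \<noteq> 0"
    and "is_interval I" and "open I" and "I \<noteq> {}"
    and "C2_on I u" and "C2_on I v"
    and "\<forall>t\<in>I. u t > 0"
    and "arc_length_on I u v"
    and "alpha_stationary \<alpha> I u v"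
    and "\<not> (\<exists>k. \<forall>t\<in>I. geod_curv u v t = k)"
  shows "\<exists>c>0. \<forall>J. is_interval J \<and> open J \<and> J \<subseteq> I \<and> (\<forall>t\<in>J. deriv u t \<noteq> 0) \<longrightarrow>
           (\<exists>\<epsilon>1 \<epsilon>2. \<epsilon>1 \<in> {-1, 1} \<and> \<epsilon>2 \<in> {-1, 1} \<and>
              (\<forall>s\<in>u ` J.
                 c\<^sup>2 < s powr (2 * \<alpha>) * (sinh s)\<^sup>2
               \<and> (inv_into J u has_real_derivative
                    \<epsilon>1 * (s powr \<alpha> * sinh s / sqrt (s powr (2 * \<alpha>) * (sinh s)\<^sup>2 - c\<^sup>2))) (at s)
               \<and> ((\<lambda>r. v (inv_into J u r)) has_real_derivative
                    \<epsilon>2 * (c / (sinh s * sqrt (s powr (2 * \<alpha>) * (sinh s)\<^sup>2 - c\<^sup>2)))) (at s)))"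
proof -
  have du: "(u has_real_derivative deriv u s) (at s)" if "s \<in> I" for s
    using assms(5) that unfolding C2_on_def by (simp add: DERIV_deriv_iff_real_differentiable)
  have dv: "(v has_real_derivative deriv v s) (at s)" if "s \<in> I" for s
    using assms(6) that unfolding C2_on_def by (simp add: DERIV_deriv_iff_real_differentiable)
  have cdu: "isCont (deriv u) s" if "s \<in> I" for s
    using assms(5) that unfolding C2_on_def by (simp add: differentiable_imp_continuous_within)
  have cu: "isCont u s" if "s \<in> I" for s
    using du[OF that] by (rule DERIV_isCont)
  have sp: "speed u v s = 1" if "s \<in> I" for s
    using assms(8) that unfolding arc_length_on_def speed_def by simp
  define F where "F = (\<lambda>s. u s powr \<alpha> * (sinh (u s))\<^sup>2 * deriv v s / speed u v s)"
  have "\<exists>C. \<forall>x\<in>I. F x = C"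
  proof (rule has_derivative_zero_constant[OF is_interval_convex[OF assms(2)]])
    fix x assume "x \<in> I"
    then have "(F has_real_derivative 0) (at x)"
      using assms(9) unfolding alpha_stationary_def F_def by blast
    then have "(F has_derivative (\<lambda>h. 0)) (at x)"
      by (simp only: has_field_derivative_def zero_times_fun)
    then show "(F has_derivative (\<lambda>h. 0)) (at x within I)"
      by (rule has_derivative_at_withinI)
  qed
  then obtain C0 where C0: "\<And>s. s \<in> I \<Longrightarrow> u s powr \<alpha> * (sinh (u s))\<^sup>2 * deriv v s = C0"
    unfolding F_def using sp by fastforce
  have upos: "u s powr \<alpha> > 0" "sinh (u s) > 0" if "s \<in> I" for s
    using assms(7) that by auto
  have vd: "deriv v s = C0 / (u s powr \<alpha> * (sinh (u s))\<^sup>2)" if "s \<in> I" for s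
    using C0[OF that] upos[OF that] by (simp add: field_simps)
  have "C0 \<noteq> 0"
  proof
    assume "C0 = 0"
    then have "\<forall>s\<in>I. deriv v s = 0" using vd by simp
    then have "\<forall>t\<in>I. geod_curv u v t = 0"
      using curv_zero[OF assms(3,5,6)] by blast
    then show False using assms(10) by blast
  qed
  have ud2: "(deriv u s)\<^sup>2 = 1 - C0\<^sup>2 / (u s powr \<alpha> * sinh (u s))\<^sup>2" if "s \<in> I" for s
  proof -
    have "(deriv u s)\<^sup>2 + (sinh (u s))\<^sup>2 * (deriv v s)\<^sup>2 = 1"
      using assms(8) that unfolding arc_length_on_def by blast
    moreover have "(sinh (u s))\<^sup>2 * (deriv v s)\<^sup>2 = C0\<^sup>2 / (u s powr \<alpha> * sinh (u s))\<^sup>2"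
      unfolding C0[OF that, symmetric] using upos[OF that] by (simp add: field_simps power2_eq_square)
    ultimately show ?thesis by simp
  qed
  have pw: "x powr (2 * \<alpha>) = (x powr \<alpha>)\<^sup>2" for x :: real
    by (simp add: power2_eq_square powr_add[symmetric])
  show ?thesis
  proof (rule exI[of _ "\<bar>C0\<bar>"], intro conjI allI impI)
    show "\<bar>C0\<bar> > 0" using \<open>C0 \<noteq> 0\<close> by simp
    fix J assume J: "is_interval J \<and> open J \<and> J \<subseteq> I \<and> (\<forall>t\<in>J. deriv u t \<noteq> 0)"
    have JI: "J \<subseteq> I" and Jo: "open J" and Ji: "is_interval J" and Jd: "\<And>t. t \<in> J \<Longrightarrow> deriv u t \<noteq> 0"
      using J by auto
    have seg: "closed_segment a b \<subseteq> J" if "a \<in> J" "b \<in> J" for a b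
      using convex_contains_segment is_interval_convex[OF Ji] that by blast
    have sign: "(\<forall>t\<in>J. deriv u t > 0) \<or> (\<forall>t\<in>J. deriv u t < 0)"
    proof (rule ccontr)
      assume "\<not> ?thesis"
      then obtain a b where ab: "a \<in> J" "b \<in> J" "deriv u a \<le> 0" "deriv u b \<ge> 0"
        by (meson not_less)
      have "continuous_on (closed_segment a b) (deriv u)"
        using seg[OF ab(1,2)] JI cdu by (meson continuous_at_imp_continuous_on subsetD)
      moreover have "0 \<in> closed_segment (deriv u a) (deriv u b)"
        using ab by (simp add: closed_segment_eq_real_ivl)
      ultimately obtain x where "x \<in> closed_segment a b" "deriv u x = 0"
        using IVT'_closed_segment_real by blast
      then show False using seg[OF ab(1,2)] Jd by blast
    qed
    define e1 :: real where "e1 = (if \<forall>t\<in>J. deriv u t > 0 then 1 else -1)"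
    have e1: "e1 \<in> {-1, 1}" unfolding e1_def by simp
    have e1d: "deriv u t = e1 * \<bar>deriv u t\<bar>" if "t \<in> J" for t
    proof (cases "\<forall>t\<in>J. deriv u t > 0")
      case True
      then have "deriv u t > 0" using that by blast
      then show ?thesis using True unfolding e1_def by simp
    next
      case False
      then have "deriv u t < 0" using that sign by blast
      then show ?thesis using False unfolding e1_def by simp
    qed
    have inj: "inj_on u J"
    proof (rule inj_onI, rule ccontr)
      have *: False if ab: "a \<in> J" "b \<in> J" "u a = u b" "a < b" for a b
      proof -
        have sub: "{a..b} \<subseteq> J" using seg[OF ab(1,2)] ab(4) by (simp add: closed_segment_eq_real_ivl)
        have "continuous_on {a..b} u"
          using sub JI cu by (meson continuous_at_imp_continuous_on subsetD)
        moreover have "u differentiable at x" if "a < x" "x < b" for x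
          using du sub JI that by (meson atLeastAtMost_iff less_imp_le real_differentiable_def subsetD)
        ultimately obtain z where z: "a < z" "z < b" "(u has_real_derivative 0) (at z)"
          using Rolle[OF ab(4,3)] by blast
        then have "z \<in> J" using sub by auto
        then have "deriv u z = 0" using z(3) DERIV_imp_deriv by blast
        then show False using Jd \<open>z \<in> J\<close> by blast
      qed
      fix a b assume "a \<in> J" "b \<in> J" "u a = u b" "a \<noteq> b"
      then show False using * by (metis linorder_neq_iff)
    qed
    define e2 where "e2 = e1 * sgn C0"
    have e2: "e2 \<in> {-1, 1}" unfolding e2_def using e1 \<open>C0 \<noteq> 0\<close> by (auto simp: sgn_if)
    show "\<exists>\<epsilon>1 \<epsilon>2. \<epsilon>1 \<in> {-1, 1} \<and> \<epsilon>2 \<in> {-1, 1} \<and>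
              (\<forall>s\<in>u ` J.
                 \<bar>C0\<bar>\<^sup>2 < s powr (2 * \<alpha>) * (sinh s)\<^sup>2
               \<and> (inv_into J u has_real_derivative
                    \<epsilon>1 * (s powr \<alpha> * sinh s / sqrt (s powr (2 * \<alpha>) * (sinh s)\<^sup>2 - \<bar>C0\<bar>\<^sup>2))) (at s)
               \<and> ((\<lambda>r. v (inv_into J u r)) has_real_derivative
                    \<epsilon>2 * (\<bar>C0\<bar> / (sinh s * sqrt (s powr (2 * \<alpha>) * (sinh s)\<^sup>2 - \<bar>C0\<bar>\<^sup>2)))) (at s))"
    proof (rule exI[of _ e1], rule exI[of _ e2], intro conjI e1 e2 ballI)
      fix s assume "s \<in> u ` J"
      then obtain t where t: "t \<in> J" "s = u t" by blast
      have tI: "t \<in> I" using t JI by blast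
      define P where "P = u t powr \<alpha> * sinh (u t)"
      have Ppos: "P > 0" unfolding P_def using upos[OF tI] by simp
      have PP: "s powr (2 * \<alpha>) * (sinh s)\<^sup>2 = P\<^sup>2" unfolding P_def t(2) pw by (simp add: power_mult_distrib)
      have Ps: "s powr \<alpha> * sinh s = P" unfolding P_def t(2) by simp
      have d2: "(deriv u t)\<^sup>2 = 1 - C0\<^sup>2 / P\<^sup>2" using ud2[OF tI] unfolding P_def .
      have "(deriv u t)\<^sup>2 > 0" using Jd[OF t(1)] by simp
      then have lt: "\<bar>C0\<bar>\<^sup>2 < P\<^sup>2" using d2 Ppos by (simp add: field_simps)
      then show "\<bar>C0\<bar>\<^sup>2 < s powr (2 * \<alpha>) * (sinh s)\<^sup>2" using PP by simp
      define Q where "Q = sqrt (P\<^sup>2 - \<bar>C0\<bar>\<^sup>2)"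
      have Qpos: "Q > 0" unfolding Q_def using lt by simp
      have "(deriv u t)\<^sup>2 = (Q / P)\<^sup>2"
        unfolding d2 Q_def using Ppos lt by (simp add: power_divide field_simps)
      then have "\<bar>deriv u t\<bar> = Q / P"
        using Ppos Qpos by (metis abs_of_pos divide_pos_pos power2_eq_iff abs_minus_cancel)
      then have dut: "deriv u t = e1 * (Q / P)" using e1d[OF t(1)] by simp
      have g: "(inv_into J u has_derivative (*) (inverse (deriv u t))) (at (u t))"
      proof (rule has_derivative_inverse_strong[OF Jo t(1)])
        show "continuous_on J u" using JI cu by (meson continuous_at_imp_continuous_on subsetD)
        show "inv_into J u (u x) = x" if "x \<in> J" for x using inj that by simp
        show "(u has_derivative (*) (deriv u t)) (at t)" using du[OF tI] by (simp add: has_field_derivative_def)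
        show "(*) (deriv u t) \<circ> (*) (inverse (deriv u t)) = id" using Jd[OF t(1)] by (auto simp: fun_eq_iff)
      qed
      have ie: "inverse (deriv u t) = e1 * (P / Q)" unfolding dut using e1 Ppos Qpos by auto
      have g': "(inv_into J u has_real_derivative e1 * (P / Q)) (at s)"
        using g unfolding has_field_derivative_def ie t(2) .
      then show "(inv_into J u has_real_derivative
                    e1 * (s powr \<alpha> * sinh s / sqrt (s powr (2 * \<alpha>) * (sinh s)\<^sup>2 - \<bar>C0\<bar>\<^sup>2))) (at s)"
        unfolding PP Ps Q_def .
      have gt: "inv_into J u s = t" using inj t by simp
      have A: "((\<lambda>r. v (inv_into J u r)) has_real_derivative deriv v t * (e1 * (P / Q))) (at s)"
        by (rule DERIV_chain2[OF _ g']) (simp add: gt dv[OF tI])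
      have B: "deriv v t * (e1 * (P / Q)) = e2 * (\<bar>C0\<bar> / (sinh s * Q))"
        unfolding vd[OF tI] e2_def t(2) P_def using upos[OF tI] Qpos \<open>C0 \<noteq> 0\<close>
        by (simp add: field_simps power2_eq_square abs_sgn sgn_mult_abs)
      from A have "((\<lambda>r. v (inv_into J u r)) has_real_derivative e2 * (\<bar>C0\<bar> / (sinh s * Q))) (at s)"
        by (simp only: B)
      then show "((\<lambda>r. v (inv_into J u r)) has_real_derivative
                    e2 * (\<bar>C0\<bar> / (sinh s * sqrt (s powr (2 * \<alpha>) * (sinh s)\<^sup>2 - \<bar>C0\<bar>\<^sup>2)))) (at s)"
        unfolding PP Q_def .
    qed
  qed
qed

end
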